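(* Let $d\ge0$ and $n>d$ be integers and let $\gamma=(\gamma_1,\dots,\gamma_l)$, $l\ge1$, be a partition with positive parts (i.e. $\gamma\neq(0)$). Enumerate $2^{\{1,\dots,l\}}=\{I_1,\dots,I_{2^l}\}$ with $I_1=\emptyset$. Then $$\lambda_{n,d}(\gamma)=\frac{1}{\prod_{k=1}^{d}m_k(\gamma)!}\sum_{\nu\in N(n,d;\gamma)}\frac{n!}{\nu(I_1)!\,\nu(I_2)!\cdots\nu(I_{2^l})!} =\frac{1}{\prod_{k=1}^{d}m_k(\gamma)!}\sum_{\nu\in N(n,d;\gamma)}\frac{(\nu(I_2)+\cdots+\nu(I_{2^l}))!}{\nu(I_2)!\cdots\nu(I_{2^l})!}\binom{n}{\nu(I_2)+\cdots+\nu(I_{2^l})}.$$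
   Context: For a finite set $X$ let $\operatorname{codim}_d(X)=d+1-|X|$. For a finite collection $\{T_1,\dots,T_l\}$ of pairwise distinct finite sets put $\rho_d(\{T_1,\dots,T_l\})=\sum_{i=1}^l\operatorname{codim}_d(T_i)$ (with $\rho_d(\emptyset)=0$) and $D_d(\{T_1,\dots,T_l\})=\operatorname{codim}_d(T_1\cap\cdots\cap T_l)-\rho_d(\{T_1,\dots,T_l\})$. For integers $d\ge0$, $n>d$, $L(n,d)$ is the set of all collections $T$ of subsets of $\{1,\dots,n\}$ such that (i) $D_d(T')>0$ for every $T'\subset T$ with $|T'|>1$, and (ii) $0\le|T_i|\le d$ for every $T_i\in T$. A partition is a weakly decreasing sequence of nonnegative integers. The type of $T=\{T_1,\dots,T_l\}\in L(n,d)$, listed so that $|T_1|\le\cdots\le|T_l|$, is $\gamma_d(T)=(\operatorname{codim}_d(T_1),\dots,\operatorname{codim}_d(T_l))$ (and $\gamma_d(\emptyset)=(0)$). $\lambda_{n,d}(\gamma)$ is the number of $T\in L(n,d)$ with $\gamma_d(T)=\gamma$. $m_k(\gamma)=|\{i:\gamma_i=k\}|$. $N(n,d;\gamma)$ is the set of maps $\nu:2^{\{1,\dots,l\}}\to\mathbb{Z}_{\ge0}$ such that: (1) $\sum_{I:\,i\in I}\nu(I)=d+1-\gamma_i$ for all $i=1,\dots,l$; (2) $\sum_{I':\,I\subset I'}\nu(I')<d+1-\sum_{i\in I}\gamma_i$ for all $I\subset\{1,\dots,l\}$ with $|I|\ge2$; (3) $\sum_{I\in 2^{\{1,\dots,l\}}}\nu(I)=n$.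 *)

theory Defs
  imports Complex_Main "HOL-Library.Multiset"
begin

definition codim :: "nat \<Rightarrow> nat set \<Rightarrow> int" where
  "codim d X = int d + 1 - int (card X)"

definition rho :: "nat \<Rightarrow> nat set set \<Rightarrow> int" where
  "rho d T = (\<Sum>X\<in>T. codim d X)"

definition Dfun :: "nat \<Rightarrow> nat set set \<Rightarrow> int" where
  "Dfun d T = codim d (\<Inter>T) - rho d T"

definition Lset :: "nat \<Rightarrow> nat \<Rightarrow> nat set set set" where
  "Lset n d = {T. T \<subseteq> Pow {1..n}
      \<and> (\<forall>T'\<subseteq>T. card T' > 1 \<longrightarrow> Dfun d T' > 0)
      \<and> (\<forall>X\<in>T. card X \<le> d)}"

text \<open>Type gamma_d(T): the codimensions listed weakly decreasing; gamma_d({}) = (0).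
  (For T in L(n,d) every member has at most d elements, so the nat codimension is exact.)\<close>
definition gammaT :: "nat \<Rightarrow> nat set set \<Rightarrow> nat list" where
  "gammaT d T = (if T = {} then [0]
     else rev (sorted_list_of_multiset (image_mset (\<lambda>X. d + 1 - card X) (mset_set T))))"

definition lambda_count :: "nat \<Rightarrow> nat \<Rightarrow> nat list \<Rightarrow> nat" where
  "lambda_count n d \<gamma> = card {T \<in> Lset n d. gammaT d T = \<gamma>}"

definition mult_part :: "nat \<Rightarrow> nat list \<Rightarrow> nat" where
  "mult_part k \<gamma> = count_list \<gamma> k"

text \<open>N(n,d;gamma): maps nu on the power set of {1..l} (l = length gamma, gamma_i = gamma!(i-1)),
  represented as functions nat set => nat vanishing outside Pow {1..l}.\<close>
definition Nset :: "nat \<Rightarrow> nat \<Rightarrow> nat list \<Rightarrow> (nat set \<Rightarrow> nat) set" where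
  "Nset n d \<gamma> = {\<nu>. (\<forall>I. I \<notin> Pow {1..length \<gamma>} \<longrightarrow> \<nu> I = 0)
     \<and> (\<forall>i\<in>{1..length \<gamma>}.
          int (\<Sum>I\<in>{I\<in>Pow {1..length \<gamma>}. i \<in> I}. \<nu> I) = int d + 1 - int (\<gamma> ! (i - 1)))
     \<and> (\<forall>I\<subseteq>{1..length \<gamma>}. card I \<ge> 2 \<longrightarrow>
          int (\<Sum>I'\<in>{I'\<in>Pow {1..length \<gamma>}. I \<subseteq> I'}. \<nu> I')
            < int d + 1 - (\<Sum>i\<in>I. int (\<gamma> ! (i - 1))))
     \<and> (\<Sum>I\<in>Pow {1..length \<gamma>}. \<nu> I) = n}"

end

theory Submission
  imports Defs "HOL-Library.FuncSet"
begin


lemma multinom: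
  assumes "finite P" "finite A" "(\<Sum>I\<in>P. \<nu> I) = card A"
  shows "card {g \<in> A \<rightarrow>\<^sub>E P. \<forall>I\<in>P. card {j\<in>A. g j = I} = \<nu> I} * (\<Prod>I\<in>P. fact (\<nu> I)) = (fact (card A) :: nat)"
  using assms
proof (induction P arbitrary: A rule: finite_induct)
  case empty
  then have "A = {}" by simp
  then show ?case by simp
next
  case (insert I0 P A)
  define k where "k = \<nu> I0"
  define m where "m = card A"
  have km: "k \<le> m" using insert.prems insert.hyps by (simp add: k_def m_def)
  define S where "S = {g \<in> A \<rightarrow>\<^sub>E insert I0 P. \<forall>I\<in>insert I0 P. card {j\<in>A. g j = I} = \<nu> I}"
  define M where "M B = {h \<in> (A - B) \<rightarrow>\<^sub>E P. \<forall>I\<in>P. card {j\<in>A - B. h j = I} = \<nu> I}" for B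
  define ext where "ext B h = (\<lambda>j. if j \<in> B then I0 else h j)" for B and h :: "'b \<Rightarrow> 'a"
  define Bs where "Bs = {B. B \<subseteq> A \<and> card B = k}"
  have SU: "S = (\<Union>B\<in>Bs. ext B ` M B)"
  proof (intro equalityI subsetI)
    fix g assume g: "g \<in> S"
    define B where "B = {j\<in>A. g j = I0}"
    have "B \<in> Bs" using g by (auto simp: S_def B_def Bs_def k_def)
    moreover have "restrict g (A - B) \<in> M B"
    proof -
      have "restrict g (A - B) \<in> (A - B) \<rightarrow>\<^sub>E P" using g by (auto simp: S_def B_def)
      moreover have "card {j\<in>A - B. restrict g (A - B) j = I} = \<nu> I" if "I \<in> P" for I
      proof -
        have "{j\<in>A - B. restrict g (A - B) j = I} = {j\<in>A. g j = I}"
          using that insert.hyps by (auto simp: B_def)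
        then show ?thesis using g that by (auto simp: S_def)
      qed
      ultimately show ?thesis by (auto simp: M_def)
    qed
    moreover have "g = ext B (restrict g (A - B))"
      using g by (auto simp: S_def B_def ext_def fun_eq_iff PiE_def extensional_def)
    ultimately show "g \<in> (\<Union>B\<in>Bs. ext B ` M B)" by blast
  next
    fix g assume "g \<in> (\<Union>B\<in>Bs. ext B ` M B)"
    then obtain B h where B: "B \<in> Bs" and h: "h \<in> M B" and gd: "g = ext B h" by blast
    have hP: "h \<in> (A - B) \<rightarrow>\<^sub>E P" using h by (simp add: M_def)
    have "g \<in> A \<rightarrow>\<^sub>E insert I0 P"
      using hP B by (auto simp: gd ext_def Bs_def PiE_def extensional_def Pi_def)
    moreover have "{j\<in>A. g j = I0} = B"
      using hP B insert.hyps by (auto simp: gd ext_def Bs_def PiE_def Pi_def)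
    moreover have "{j\<in>A. g j = I} = {j\<in>A - B. h j = I}" if "I \<in> P" for I
      using that insert.hyps by (auto simp: gd ext_def)
    ultimately show "g \<in> S" using h B by (auto simp: S_def M_def Bs_def k_def)
  qed
  have inj: "inj_on (ext B) (M B)" for B
  proof
    fix h1 h2 assume "h1 \<in> M B" "h2 \<in> M B" "ext B h1 = ext B h2"
    then show "h1 = h2"
      by (auto simp: M_def ext_def fun_eq_iff PiE_def extensional_def) (metis)
  qed
  have finM: "finite (M B)" for B
  proof -
    have "M B \<subseteq> (A - B) \<rightarrow>\<^sub>E P" by (auto simp: M_def)
    moreover have "finite ((A - B) \<rightarrow>\<^sub>E P)" using insert by (simp add: finite_PiE)
    ultimately show ?thesis by (rule finite_subset)
  qed
  have disj: "ext B1 ` M B1 \<inter> ext B2 ` M B2 = {}" if "B1 \<in> Bs" "B2 \<in> Bs" "B1 \<noteq> B2" for B1 B2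
  proof (rule ccontr)
    assume "ext B1 ` M B1 \<inter> ext B2 ` M B2 \<noteq> {}"
    then obtain h1 h2 where h1: "h1 \<in> M B1" and h2: "h2 \<in> M B2" and e: "ext B1 h1 = ext B2 h2" by blast
    have "{j\<in>A. ext B1 h1 j = I0} = B1"
      using h1 that insert.hyps by (auto simp: ext_def Bs_def M_def PiE_def Pi_def)
    moreover have "{j\<in>A. ext B2 h2 j = I0} = B2"
      using h2 that insert.hyps by (auto simp: ext_def Bs_def M_def PiE_def Pi_def)
    ultimately show False using e that by simp
  qed
  have finBs: "finite Bs" using insert.prems by (simp add: Bs_def)
  have cardS: "card S = (\<Sum>B\<in>Bs. card (M B))"
    unfolding SU
    by (subst card_UN_disjoint) (use finBs finM disj inj in \<open>auto simp: card_image\<close>)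
  have IH: "card (M B) * (\<Prod>I\<in>P. fact (\<nu> I)) = fact (m - k)" if "B \<in> Bs" for B
  proof -
    have "card (A - B) = m - k" using that insert.prems by (auto simp: Bs_def m_def card_Diff_subset finite_subset)
    moreover have "(\<Sum>I\<in>P. \<nu> I) = m - k" using insert.prems insert.hyps by (simp add: m_def k_def)
    ultimately show ?thesis using insert.IH[of "A - B"] insert.prems by (simp add: M_def)
  qed
  have "card S * (\<Prod>I\<in>insert I0 P. fact (\<nu> I)) = (\<Sum>B\<in>Bs. card (M B) * (\<Prod>I\<in>P. fact (\<nu> I))) * fact k"
    using insert.hyps by (simp add: cardS sum_distrib_right k_def mult.commute mult.left_commute)
  also have "\<dots> = (\<Sum>B\<in>Bs. fact (m - k)) * fact k" using IH by simp
  also have "\<dots> = (m choose k) * fact (m - k) * fact k"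
    using insert.prems by (simp add: Bs_def n_subsets m_def)
  also have "\<dots> = fact m" using binomial_fact_lemma[OF km] by (simp add: mult.commute mult.left_commute)
  finally show ?case by (simp add: S_def m_def)
qed



lemma colbij:
  assumes "finite L" "finite T" "finite K" "a ` L \<subseteq> K"
    "\<forall>k. card {i\<in>L. a i = k} = card {X\<in>T. b X = k}"
  shows "card {h \<in> L \<rightarrow>\<^sub>E T. bij_betw h L T \<and> (\<forall>i\<in>L. b (h i) = a i)}
         = (\<Prod>k\<in>K. fact (card {i\<in>L. a i = k}))"
  using assms
proof (induction L arbitrary: T rule: finite_induct)
  case empty
  have "T = {}"
  proof (rule ccontr)
    assume "T \<noteq> {}" then obtain X where "X \<in> T" by blast
    moreover have "card {Y\<in>T. b Y = b X} = 0" using empty.prems(4) by auto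
    ultimately show False using empty.prems(1) by (auto simp: card_eq_0_iff)
  qed
  moreover have "{h. h = (\<lambda>x. undefined) \<and> bij_betw h {} {}} = {\<lambda>x. undefined}"
    by (auto simp: bij_betw_def)
  ultimately show ?case by (simp add: bij_betw_def)
next
  case (insert i0 L T)
  define k0 where "k0 = a i0"
  define T0 where "T0 = {X\<in>T. b X = k0}"
  define S' where "S' T' = {h \<in> L \<rightarrow>\<^sub>E T'. bij_betw h L T' \<and> (\<forall>i\<in>L. b (h i) = a i)}" for T'
  define S where "S = {h \<in> insert i0 L \<rightarrow>\<^sub>E T. bij_betw h (insert i0 L) T \<and> (\<forall>i\<in>insert i0 L. b (h i) = a i)}"
  have k0K: "k0 \<in> K" using insert.prems by (auto simp: k0_def)
  have cL: "card {i\<in>insert i0 L. a i = k} = card {i\<in>L. a i = k} + (if k = k0 then 1 else 0)" for k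
  proof -
    have "{i\<in>insert i0 L. a i = k} = (if k = k0 then insert i0 {i\<in>L. a i = k} else {i\<in>L. a i = k})"
      by (auto simp: k0_def)
    then show ?thesis using insert.hyps by auto
  qed
  have cT: "card {Y\<in>T - {X}. b Y = k} = card {i\<in>L. a i = k}" if "X \<in> T0" for X k
  proof -
    have "{Y\<in>T - {X}. b Y = k} = {Y\<in>T. b Y = k} - {X}" by auto
    then have "card {Y\<in>T - {X}. b Y = k} = card {Y\<in>T. b Y = k} - (if k = k0 then 1 else 0)"
      using that insert.prems(1) by (auto simp: T0_def)
    then show ?thesis using insert.prems(4) cL[of k] by simp
  qed
  have IH: "card (S' (T - {X})) = (\<Prod>k\<in>K. fact (card {i\<in>L. a i = k}))" if "X \<in> T0" for X
    unfolding S'_def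
    by (rule insert.IH) (use insert.prems cT[OF that] in auto)
  have SU: "S = (\<Union>X\<in>T0. (\<lambda>h. h(i0 := X)) ` S' (T - {X}))"
  proof (intro equalityI subsetI)
    fix g assume g: "g \<in> S"
    define X where "X = g i0"
    define h where "h = g(i0 := undefined)"
    have X: "X \<in> T0" using g by (auto simp: S_def X_def T0_def k0_def)
    have "h \<in> S' (T - {X})"
    proof -
      have bij: "bij_betw g (insert i0 L) T" using g by (simp add: S_def)
      have "g ` L = T - {X}" using bij insert.hyps
        by (auto simp: bij_betw_def X_def inj_on_def)
      moreover have "inj_on g L" using bij by (auto simp: bij_betw_def inj_on_def)
      ultimately have "bij_betw g L (T - {X})" by (simp add: bij_betw_def)
      then have "bij_betw h L (T - {X})"
        by (rule bij_betw_cong[THEN iffD1, rotated]) (use insert.hyps in \<open>auto simp: h_def\<close>)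
      moreover have "h \<in> L \<rightarrow>\<^sub>E T - {X}" using g \<open>g ` L = T - {X}\<close> insert.hyps
        by (auto simp: h_def S_def PiE_def extensional_def)
      moreover have "\<forall>i\<in>L. b (h i) = a i" using g insert.hyps by (auto simp: h_def S_def)
      ultimately show ?thesis by (simp add: S'_def)
    qed
    moreover have "g = h(i0 := X)" by (simp add: h_def X_def)
    ultimately show "g \<in> (\<Union>X\<in>T0. (\<lambda>h. h(i0 := X)) ` S' (T - {X}))" using X by blast
  next
    fix g assume "g \<in> (\<Union>X\<in>T0. (\<lambda>h. h(i0 := X)) ` S' (T - {X}))"
    then obtain X h where X: "X \<in> T0" and h: "h \<in> S' (T - {X})" and gd: "g = h(i0 := X)" by blast
    have hb: "bij_betw h L (T - {X})" and hE: "h \<in> L \<rightarrow>\<^sub>E T - {X}" and hc: "\<forall>i\<in>L. b (h i) = a i"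
      using h by (auto simp: S'_def)
    have XT: "X \<in> T" using X by (simp add: T0_def)
    have "g ` insert i0 L = T"
    proof -
      have "h ` L = T - {X}" using hb by (simp add: bij_betw_def)
      moreover have "g ` L = h ` L" using insert.hyps by (auto simp: gd)
      ultimately show ?thesis using XT by (auto simp: gd)
    qed
    moreover have "inj_on g (insert i0 L)"
    proof -
      have "inj_on h L" using hb by (simp add: bij_betw_def)
      moreover have "h i \<noteq> X" if "i \<in> L" for i using hE that by auto
      ultimately show ?thesis using insert.hyps by (auto simp: gd inj_on_def)
    qed
    moreover have "g \<in> insert i0 L \<rightarrow>\<^sub>E T" using hE XT insert.hyps
      by (auto simp: gd PiE_def extensional_def)
    moreover have "\<forall>i\<in>insert i0 L. b (g i) = a i" using hc X insert.hyps
      by (auto simp: gd T0_def k0_def)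
    ultimately show "g \<in> S" by (simp add: S_def bij_betw_def)
  qed
  have inj: "inj_on (\<lambda>h. h(i0 := X)) (S' (T - {X}))" for X
  proof
    fix h1 h2 assume "h1 \<in> S' (T - {X})" "h2 \<in> S' (T - {X})" "h1(i0 := X) = h2(i0 := X)"
    then show "h1 = h2" using insert.hyps
      by (auto simp: S'_def fun_eq_iff PiE_def extensional_def) (metis fun_upd_other)
  qed
  have finS': "finite (S' T')" if "finite T'" for T'
  proof -
    have "S' T' \<subseteq> L \<rightarrow>\<^sub>E T'" by (auto simp: S'_def)
    then show ?thesis using finite_PiE[of L "\<lambda>_. T'"] insert.hyps that finite_subset by blast
  qed
  have finT0: "finite T0" using insert.prems by (simp add: T0_def)
  have cardS: "card S = (\<Sum>X\<in>T0. card (S' (T - {X})))"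
    unfolding SU
  proof (subst card_UN_disjoint)
    show "finite T0" by (fact finT0)
    show "\<forall>X\<in>T0. finite ((\<lambda>h. h(i0 := X)) ` S' (T - {X}))" using finS' insert.prems(1) by auto
    show "\<forall>X\<in>T0. \<forall>Y\<in>T0. X \<noteq> Y \<longrightarrow> (\<lambda>h. h(i0 := X)) ` S' (T - {X}) \<inter> (\<lambda>h. h(i0 := Y)) ` S' (T - {Y}) = {}"
      by (auto simp: fun_eq_iff) (metis fun_upd_same)
    show "(\<Sum>X\<in>T0. card ((\<lambda>h. h(i0 := X)) ` S' (T - {X}))) = (\<Sum>X\<in>T0. card (S' (T - {X})))"
      using inj by (simp add: card_image)
  qed
  also have "\<dots> = card T0 * (\<Prod>k\<in>K. fact (card {i\<in>L. a i = k}))" using IH by simp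
  also have "card T0 = card {i\<in>L. a i = k0} + 1"
    using insert.prems(4) cL[of k0] by (simp add: T0_def)
  finally have cS: "card S = (card {i\<in>L. a i = k0} + 1) * (\<Prod>k\<in>K. fact (card {i\<in>L. a i = k}))" .
  have "(\<Prod>k\<in>K. fact (card {i\<in>insert i0 L. a i = k})) =
      fact (card {i\<in>insert i0 L. a i = k0}) * (\<Prod>k\<in>K - {k0}. fact (card {i\<in>insert i0 L. a i = k}))"
    using k0K insert.prems by (simp add: prod.remove)
  also have "(\<Prod>k\<in>K - {k0}. fact (card {i\<in>insert i0 L. a i = k})) = (\<Prod>k\<in>K - {k0}. fact (card {i\<in>L. a i = k}))"
    by (rule prod.cong[OF refl]) (simp only: cL, simp)
  also have "fact (card {i\<in>insert i0 L. a i = k0}) = (card {i\<in>L. a i = k0} + 1) * fact (card {i\<in>L. a i = k0})"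
    by (simp only: cL if_True) (simp add: fact_Suc)
  finally have ch: "(\<Prod>k\<in>K. fact (card {i\<in>insert i0 L. a i = k})) = (card {i\<in>L. a i = k0} + 1) * fact (card {i\<in>L. a i = k0}) * (\<Prod>k\<in>K - {k0}. fact (card {i\<in>L. a i = k}))" .
  have pr: "(\<Prod>k\<in>K. fact (card {i\<in>L. a i = k})) = fact (card {i\<in>L. a i = k0}) * (\<Prod>k\<in>K - {k0}. fact (card {i\<in>L. a i = k}))"
    using k0K insert.prems by (simp add: prod.remove)
  then have "(\<Prod>k\<in>K. fact (card {i\<in>insert i0 L. a i = k})) = (card {i\<in>L. a i = k0} + 1) * (\<Prod>k\<in>K. fact (card {i\<in>L. a i = k}))"
    by (simp only: ch pr mult.assoc)
  then show ?case using cS by (simp add: S_def)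
qed



lemma count_img_mset_set:
  assumes "finite S"
  shows "count (image_mset f (mset_set S)) k = card {x\<in>S. f x = k}"
proof -
  have "count (image_mset f (mset_set S)) k = (\<Sum>y\<in>f -` {k} \<inter> S. 1)"
    using assms by (simp add: count_image_mset)
  also have "f -` {k} \<inter> S = {x\<in>S. f x = k}" by auto
  finally show ?thesis by simp
qed

lemma mset_gamma:
  "image_mset (\<lambda>i. \<gamma> ! (i - 1)) (mset_set {1..length \<gamma>}) = mset \<gamma>"
proof -
  have "mset_set {1..length \<gamma>} = mset [1..<Suc (length \<gamma>)]"
    by (metis atLeastLessThanSuc_atLeastAtMost distinct_upt mset_set_set set_upt)
  moreover have "map (\<lambda>i. \<gamma> ! (i - 1)) [1..<Suc (length \<gamma>)] = \<gamma>"
  proof -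
    have "[1..<Suc (length \<gamma>)] = map Suc [0..<length \<gamma>]" by (simp add: map_Suc_upt)
    then show ?thesis by (simp add: o_def map_nth)
  qed
  ultimately show ?thesis by (metis mset_map)
qed

lemma rev_sort_id:
  assumes "sorted_wrt (\<ge>) (\<gamma>::nat list)"
  shows "rev (sort \<gamma>) = \<gamma>"
proof -
  have "sorted (rev \<gamma>)" using assms by (simp add: sorted_wrt_rev)
  then have "sort \<gamma> = rev \<gamma>" by (intro properties_for_sort) auto
  then show ?thesis by simp
qed

lemma dfun_img:
  assumes "inj_on f L" "I \<subseteq> L" "I \<noteq> {}" "\<forall>i\<in>L. f i \<subseteq> A"
  shows "Dfun d (f ` I) = int d + 1 - int (card {j\<in>A. \<forall>i\<in>I. j \<in> f i})
            - (\<Sum>i\<in>I. int d + 1 - int (card (f i)))"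
proof -
  have "\<Inter> (f ` I) = {j\<in>A. \<forall>i\<in>I. j \<in> f i}" using assms by auto
  moreover have "rho d (f ` I) = (\<Sum>i\<in>I. int d + 1 - int (card (f i)))"
    unfolding rho_def codim_def
    by (subst sum.reindex) (use assms inj_on_subset[OF assms(1) assms(2)] in auto)
  ultimately show ?thesis by (simp add: Dfun_def codim_def)
qed



lemma partA:
  fixes n d :: nat and \<gamma> :: "nat list"
  defines "L \<equiv> {1..length \<gamma>}" and "A \<equiv> {1..n}"
  defines "Lab \<equiv> {f \<in> L \<rightarrow>\<^sub>E Pow A. (\<forall>i\<in>L. int (card (f i)) = int d + 1 - int (\<gamma> ! (i - 1)))
      \<and> (\<forall>I\<subseteq>L. 2 \<le> card I \<longrightarrow> int (card {j\<in>A. \<forall>i\<in>I. j \<in> f i}) < int d + 1 - (\<Sum>i\<in>I. int (\<gamma> ! (i - 1))))}"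
  shows "real (card Lab) = (\<Sum>\<nu>\<in>Nset n d \<gamma>. real (fact n) / (\<Prod>I\<in>Pow {1..length \<gamma>}. real (fact (\<nu> I))))"
proof -
  define P where "P = Pow L"
  define N where "N = Nset n d \<gamma>"
  define nu where "nu g I = card {j\<in>A. g j = I}" for g :: "nat \<Rightarrow> nat set" and I
  define G where "G = {g \<in> A \<rightarrow>\<^sub>E P. nu g \<in> N}"
  define F where "F \<nu> = {g \<in> A \<rightarrow>\<^sub>E P. nu g = \<nu>}" for \<nu>
  have finA: "finite A" and finL: "finite L" and finP: "finite P" and cA: "card A = n"
    by (auto simp: A_def L_def P_def)
  have sumfib: "card {j\<in>A. g j \<in> Q} = (\<Sum>I\<in>Q. nu g I)" if "g \<in> A \<rightarrow>\<^sub>E P" "Q \<subseteq> P" for g Q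
  proof -
    have "{j\<in>A. g j \<in> Q} = (\<Union>I\<in>Q. {j\<in>A. g j = I})" by auto
    moreover have "finite Q" using that finP finite_subset by blast
    moreover have "card (\<Union>I\<in>Q. {j\<in>A. g j = I}) = (\<Sum>I\<in>Q. card {j\<in>A. g j = I})"
      using \<open>finite Q\<close> finA by (intro card_UN_disjoint) auto
    ultimately show ?thesis unfolding nu_def by simp
  qed
  have nu0: "nu g I = 0" if "g \<in> A \<rightarrow>\<^sub>E P" "I \<notin> P" for g I
  proof -
    have "{j\<in>A. g j = I} = {}" using that by auto
    then show ?thesis unfolding nu_def by (metis card.empty)
  qed
  have nuN: "nu g \<in> N \<longleftrightarrow> (\<forall>i\<in>L. int (card {j\<in>A. i \<in> g j}) = int d + 1 - int (\<gamma> ! (i - 1)))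
      \<and> (\<forall>I\<subseteq>L. 2 \<le> card I \<longrightarrow> int (card {j\<in>A. I \<subseteq> g j}) < int d + 1 - (\<Sum>i\<in>I. int (\<gamma> ! (i - 1))))"
    if g: "g \<in> A \<rightarrow>\<^sub>E P" for g
  proof -
    have e1: "card {j\<in>A. i \<in> g j} = (\<Sum>I\<in>{I\<in>P. i \<in> I}. nu g I)" for i
    proof -
      have "{j\<in>A. i \<in> g j} = {j\<in>A. g j \<in> {I\<in>P. i \<in> I}}" using g by auto
      then show ?thesis using sumfib[OF g, of "{I\<in>P. i \<in> I}"] by auto
    qed
    have e2: "card {j\<in>A. I \<subseteq> g j} = (\<Sum>I'\<in>{I'\<in>P. I \<subseteq> I'}. nu g I')" for I
    proof -
      have "{j\<in>A. I \<subseteq> g j} = {j\<in>A. g j \<in> {I'\<in>P. I \<subseteq> I'}}" using g by auto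
      then show ?thesis using sumfib[OF g, of "{I'\<in>P. I \<subseteq> I'}"] by auto
    qed
    have e3: "(\<Sum>I\<in>P. nu g I) = n"
    proof -
      have "{j\<in>A. g j \<in> P} = A" using g by auto
      then show ?thesis using sumfib[OF g, of P] cA by auto
    qed
    show ?thesis
      unfolding N_def Nset_def mem_Collect_eq
      using nu0[OF g] e1 e2 e3 by (simp add: P_def L_def)
  qed
  define \<phi> where "\<phi> f = restrict (\<lambda>j. {i\<in>L. j \<in> f i}) A" for f :: "nat \<Rightarrow> nat set"
  define \<psi> where "\<psi> g = restrict (\<lambda>i. {j\<in>A. i \<in> g j}) L" for g :: "nat \<Rightarrow> nat set"
  have phi1: "{j\<in>A. i \<in> \<phi> f j} = f i" if "f \<in> L \<rightarrow>\<^sub>E Pow A" "i \<in> L" for f i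
    using that by (auto simp: \<phi>_def)
  have phi2: "{j\<in>A. I \<subseteq> \<phi> f j} = {j\<in>A. \<forall>i\<in>I. j \<in> f i}" if "I \<subseteq> L" for f I
    using that by (auto simp: \<phi>_def)
  have cLabG: "card Lab = card G"
  proof (rule bij_betw_same_card, rule bij_betw_byWitness[where f' = \<psi>])
    show "\<forall>f\<in>Lab. \<psi> (\<phi> f) = f"
    proof
      fix f assume "f \<in> Lab"
      then have "f \<in> L \<rightarrow>\<^sub>E Pow A" unfolding Lab_def by blast
      then show "\<psi> (\<phi> f) = f" by (auto simp: \<psi>_def \<phi>_def fun_eq_iff PiE_def extensional_def)
    qed
    show "\<forall>g\<in>G. \<phi> (\<psi> g) = g"
      by (auto simp: G_def \<psi>_def \<phi>_def fun_eq_iff PiE_def extensional_def P_def)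
    show "\<phi> ` Lab \<subseteq> G"
    proof
      fix g assume "g \<in> \<phi> ` Lab"
      then obtain f where f: "f \<in> Lab" and gd: "g = \<phi> f" by blast
      have fE: "f \<in> L \<rightarrow>\<^sub>E Pow A" and fc: "\<forall>i\<in>L. int (card (f i)) = int d + 1 - int (\<gamma> ! (i - 1))"
        and fp: "\<forall>I\<subseteq>L. 2 \<le> card I \<longrightarrow> int (card {j\<in>A. \<forall>i\<in>I. j \<in> f i}) < int d + 1 - (\<Sum>i\<in>I. int (\<gamma> ! (i - 1)))"
        using f unfolding Lab_def by blast+
      have gE: "g \<in> A \<rightarrow>\<^sub>E P" by (auto simp: gd \<phi>_def P_def)
      have "\<forall>i\<in>L. int (card {j\<in>A. i \<in> g j}) = int d + 1 - int (\<gamma> ! (i - 1))"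
        using fc by (simp add: gd phi1[OF fE])
      moreover have "\<forall>I\<subseteq>L. 2 \<le> card I \<longrightarrow> int (card {j\<in>A. I \<subseteq> g j}) < int d + 1 - (\<Sum>i\<in>I. int (\<gamma> ! (i - 1)))"
        using fp by (simp add: gd phi2)
      ultimately show "g \<in> G" unfolding G_def using gE nuN[OF gE] by blast
    qed
    show "\<psi> ` G \<subseteq> Lab"
    proof
      fix f assume "f \<in> \<psi> ` G"
      then obtain g where g: "g \<in> G" and fd: "f = \<psi> g" by blast
      have gE: "g \<in> A \<rightarrow>\<^sub>E P" using g by (simp add: G_def)
      have c: "nu g \<in> N" using g by (simp add: G_def)
      have fE: "f \<in> L \<rightarrow>\<^sub>E Pow A" by (auto simp: fd \<psi>_def)
      have "{j\<in>A. \<forall>i\<in>I. j \<in> f i} = {j\<in>A. I \<subseteq> g j}" if "I \<subseteq> L" for I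
        using that by (auto simp: fd \<psi>_def)
      moreover have "f i = {j\<in>A. i \<in> g j}" if "i \<in> L" for i using that by (simp add: fd \<psi>_def)
      ultimately have "(\<forall>i\<in>L. int (card (f i)) = int d + 1 - int (\<gamma> ! (i - 1)))
        \<and> (\<forall>I\<subseteq>L. 2 \<le> card I \<longrightarrow> int (card {j\<in>A. \<forall>i\<in>I. j \<in> f i}) < int d + 1 - (\<Sum>i\<in>I. int (\<gamma> ! (i - 1))))"
        using nuN[OF gE] c by simp
      then show "f \<in> Lab" using fE unfolding Lab_def by blast
    qed
  qed
  have finN: "finite N"
  proof -
    have "inj_on (\<lambda>\<nu>. restrict \<nu> P) N"
    proof
      fix x y assume "x \<in> N" "y \<in> N" "restrict x P = restrict y P"
      then show "x = y" by (auto simp: N_def Nset_def fun_eq_iff P_def L_def restrict_def) metis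
    qed
    moreover have "(\<lambda>\<nu>. restrict \<nu> P) ` N \<subseteq> P \<rightarrow>\<^sub>E {0..n}"
    proof
      fix r assume "r \<in> (\<lambda>\<nu>. restrict \<nu> P) ` N"
      then obtain \<nu> where \<nu>: "\<nu> \<in> N" and rd: "r = restrict \<nu> P" by blast
      have "\<nu> I \<le> n" if "I \<in> P" for I
      proof -
        have "\<nu> I \<le> (\<Sum>I\<in>P. \<nu> I)" using that finP by (intro member_le_sum) auto
        then show ?thesis using \<nu> by (simp add: N_def Nset_def P_def L_def)
      qed
      then show "r \<in> P \<rightarrow>\<^sub>E {0..n}" by (auto simp: rd)
    qed
    moreover have "finite (P \<rightarrow>\<^sub>E {0..n})" using finP by (simp add: finite_PiE)
    ultimately show ?thesis by (meson finite_imageD finite_subset)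
  qed
  have finF: "finite (F \<nu>)" for \<nu>
  proof -
    have "F \<nu> \<subseteq> A \<rightarrow>\<^sub>E P" by (auto simp: F_def)
    then show ?thesis using finite_PiE[of A "\<lambda>_. P"] finA finP finite_subset by blast
  qed
  have cG: "card G = (\<Sum>\<nu>\<in>N. card (F \<nu>))"
  proof -
    have "G = (\<Union>\<nu>\<in>N. F \<nu>)" by (auto simp: G_def F_def)
    moreover have "card (\<Union>\<nu>\<in>N. F \<nu>) = (\<Sum>\<nu>\<in>N. card (F \<nu>))"
      using finN finF by (intro card_UN_disjoint) (auto simp: F_def)
    ultimately show ?thesis by simp
  qed
  have cF: "real (card (F \<nu>)) = real (fact n) / (\<Prod>I\<in>P. real (fact (\<nu> I)))" if "\<nu> \<in> N" for \<nu>
  proof -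
    have z: "\<nu> I = 0" if "I \<notin> P" for I using \<open>\<nu> \<in> N\<close> that by (auto simp: N_def Nset_def P_def L_def)
    have s: "(\<Sum>I\<in>P. \<nu> I) = card A" using \<open>\<nu> \<in> N\<close> cA by (auto simp: N_def Nset_def P_def L_def)
    have "F \<nu> = {g \<in> A \<rightarrow>\<^sub>E P. \<forall>I\<in>P. card {j\<in>A. g j = I} = \<nu> I}"
    proof (intro equalityI subsetI)
      fix g assume "g \<in> F \<nu>" then show "g \<in> {g \<in> A \<rightarrow>\<^sub>E P. \<forall>I\<in>P. card {j\<in>A. g j = I} = \<nu> I}"
        by (auto simp: F_def nu_def)
    next
      fix g assume g: "g \<in> {g \<in> A \<rightarrow>\<^sub>E P. \<forall>I\<in>P. card {j\<in>A. g j = I} = \<nu> I}"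
      then have gE: "g \<in> A \<rightarrow>\<^sub>E P" by simp
      have "nu g I = \<nu> I" for I
        using g nu0[OF gE, of I] z[of I] by (cases "I \<in> P") (auto simp: nu_def)
      then show "g \<in> F \<nu>" using gE by (auto simp: F_def)
    qed
    then have "card (F \<nu>) * (\<Prod>I\<in>P. fact (\<nu> I)) = (fact n :: nat)"
      using multinom[OF finP finA s] cA by simp
    then have "real (card (F \<nu>)) * (\<Prod>I\<in>P. real (fact (\<nu> I))) = real (fact n)"
      by (metis of_nat_mult of_nat_prod)
    moreover have "(\<Prod>I\<in>P. real (fact (\<nu> I))) \<noteq> 0" by (simp add: prod_zero_iff finP)
    ultimately show ?thesis by (simp add: field_simps)
  qed
  have "real (card Lab) = (\<Sum>\<nu>\<in>N. real (card (F \<nu>)))" by (simp add: cLabG cG)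
  also have "\<dots> = (\<Sum>\<nu>\<in>N. real (fact n) / (\<Prod>I\<in>P. real (fact (\<nu> I))))"
    by (rule sum.cong) (auto simp: cF)
  finally show ?thesis by (simp add: N_def P_def L_def)
qed



lemma partB:
  fixes n d :: nat and \<gamma> :: "nat list"
  assumes ne: "\<gamma> \<noteq> []" and srt: "sorted_wrt (\<ge>) \<gamma>" and posg: "\<forall>x\<in>set \<gamma>. x > 0"
  defines "L \<equiv> {1..length \<gamma>}" and "A \<equiv> {1..n}"
  defines "Lab \<equiv> {f \<in> L \<rightarrow>\<^sub>E Pow A. (\<forall>i\<in>L. int (card (f i)) = int d + 1 - int (\<gamma> ! (i - 1)))
      \<and> (\<forall>I\<subseteq>L. 2 \<le> card I \<longrightarrow> int (card {j\<in>A. \<forall>i\<in>I. j \<in> f i}) < int d + 1 - (\<Sum>i\<in>I. int (\<gamma> ! (i - 1))))}"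
  shows "card Lab = lambda_count n d \<gamma> * (\<Prod>k=1..d. fact (mult_part k \<gamma>))"
proof -
  define gi where "gi i = \<gamma> ! (i - 1)" for i
  define col where "col X = d + 1 - card X" for X :: "nat set"
  define Target where "Target = {T \<in> Lset n d. gammaT d T = \<gamma>}"
  have finA: "finite A" and finL: "finite L" by (auto simp: A_def L_def)
  have Lne: "L \<noteq> {}" using ne by (cases \<gamma>) (auto simp: L_def)
  have pos: "gi i > 0" if "i \<in> L" for i
  proof -
    have "gi i \<in> set \<gamma>" using that ne by (auto simp: gi_def L_def)
    then show ?thesis using posg by auto
  qed
  have mg: "image_mset gi (mset_set L) = mset \<gamma>"
    unfolding gi_def L_def by (rule mset_gamma)
  have cntL: "card {i\<in>L. gi i = k} = count (mset \<gamma>) k" for k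
    using count_img_mset_set[OF finL, of gi k] mg by simp
  have sumg: "(\<Sum>i\<in>I. int d + 1 - int (card (f i))) = (\<Sum>i\<in>I. int (gi i))"
    if "\<forall>i\<in>L. int (card (f i)) = int d + 1 - int (gi i)" "I \<subseteq> L" for f I
    using that by (intro sum.cong) auto
  have injLab: "inj_on f L" if f: "f \<in> Lab" for f
  proof
    have fE: "f \<in> L \<rightarrow>\<^sub>E Pow A" and fc: "\<forall>i\<in>L. int (card (f i)) = int d + 1 - int (gi i)"
      and fp: "\<forall>I\<subseteq>L. 2 \<le> card I \<longrightarrow> int (card {j\<in>A. \<forall>i\<in>I. j \<in> f i}) < int d + 1 - (\<Sum>i\<in>I. int (gi i))"
      using f unfolding Lab_def gi_def by blast+
    fix i i' assume ii: "i \<in> L" "i' \<in> L" "f i = f i'"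
    show "i = i'"
    proof (rule ccontr)
      assume nq: "i \<noteq> i'"
      have c2: "card {i, i'} = 2" using nq by simp
      have sL: "{i, i'} \<subseteq> L" using ii by auto
      have lt: "int (card {j\<in>A. \<forall>x\<in>{i,i'}. j \<in> f x}) < int d + 1 - (\<Sum>x\<in>{i,i'}. int (gi x))"
        using fp[rule_format, OF sL] c2 by simp
      have fiA: "f i \<subseteq> A" using fE ii(1) by blast
      have e1: "{j\<in>A. \<forall>x\<in>{i,i'}. j \<in> f x} = f i" using fiA ii(3) by blast
      have e2: "int (card (f i)) = int d + 1 - int (gi i)" using fc ii(1) by blast
      have e3: "(\<Sum>x\<in>{i,i'}. int (gi x)) = int (gi i) + int (gi i')" using nq by simp
      have "int (card (f i)) < int d + 1 - (int (gi i) + int (gi i'))" using lt unfolding e1 e3 .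
      then show False using e2 pos[OF ii(2)] by linarith
    qed
  qed
  have colLab: "col (f i) = gi i" if "f \<in> Lab" "i \<in> L" for f i
  proof -
    have "\<forall>i\<in>L. int (card (f i)) = int d + 1 - int (gi i)" using that(1) unfolding Lab_def gi_def by blast
    then have "int (card (f i)) = int d + 1 - int (gi i)" using that(2) by blast
    then show ?thesis unfolding col_def by linarith
  qed
  have imgT: "f ` L \<in> Target" if f: "f \<in> Lab" for f
  proof -
    have fE: "f \<in> L \<rightarrow>\<^sub>E Pow A" and fc: "\<forall>i\<in>L. int (card (f i)) = int d + 1 - int (gi i)"
      and fp: "\<forall>I\<subseteq>L. 2 \<le> card I \<longrightarrow> int (card {j\<in>A. \<forall>i\<in>I. j \<in> f i}) < int d + 1 - (\<Sum>i\<in>I. int (gi i))"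
      using f by (auto simp: Lab_def gi_def)
    have inj: "inj_on f L" by (rule injLab[OF f])
    have sub: "\<forall>i\<in>L. f i \<subseteq> A" using fE by auto
    have "\<forall>T'\<subseteq>f ` L. card T' > 1 \<longrightarrow> Dfun d T' > 0"
    proof (intro allI impI)
      fix T' assume T': "T' \<subseteq> f ` L" "card T' > 1"
      define I where "I = {i\<in>L. f i \<in> T'}"
      have fI: "f ` I = T'" using T' by (auto simp: I_def)
      have IL: "I \<subseteq> L" by (auto simp: I_def)
      have cI: "card I = card T'" using fI inj_on_subset[OF inj IL] card_image by metis
      have Ine: "I \<noteq> {}" using cI T' by auto
      have "Dfun d T' = int d + 1 - int (card {j\<in>A. \<forall>i\<in>I. j \<in> f i}) - (\<Sum>i\<in>I. int (gi i))"
        using dfun_img[OF inj IL Ine sub, of d] sumg[OF fc IL] fI by simp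
      moreover have "2 \<le> card I" using cI T' by simp
      ultimately show "Dfun d T' > 0" using fp[rule_format, OF IL] by simp
    qed
    moreover have "f ` L \<subseteq> Pow {1..n}" using fE by (auto simp: A_def)
    moreover have "\<forall>X\<in>f ` L. card X \<le> d"
    proof
      fix X assume "X \<in> f ` L"
      then obtain i where i: "i \<in> L" "X = f i" by blast
      have "int (card (f i)) = int d + 1 - int (gi i)" using fc i by blast
      moreover have "gi i > 0" using pos i by blast
      ultimately have "card (f i) \<le> d" by linarith
      then show "card X \<le> d" using i(2) by simp
    qed
    moreover have "gammaT d (f ` L) = \<gamma>"
    proof -
      have "image_mset (\<lambda>X. d + 1 - card X) (mset_set (f ` L)) = image_mset (col \<circ> f) (mset_set L)"
        using inj by (simp add: image_mset_mset_set[OF inj, symmetric] col_def image_mset.compositionality o_def)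
      also have "\<dots> = image_mset gi (mset_set L)"
        by (rule image_mset_cong) (use colLab[OF f] finL in auto)
      finally show ?thesis using Lne mg rev_sort_id[OF srt] by (simp add: gammaT_def)
    qed
    ultimately show ?thesis by (simp add: Target_def Lset_def)
  qed
  have fib: "card {f\<in>Lab. f ` L = T} = (\<Prod>k=1..d. fact (mult_part k \<gamma>))" if T: "T \<in> Target" for T
  proof -
    have Tl: "T \<in> Lset n d" and gT: "gammaT d T = \<gamma>" using T unfolding Target_def by blast+
    have TA: "T \<subseteq> Pow A" and Tc: "\<forall>X\<in>T. card X \<le> d"
      and TD: "\<forall>T'\<subseteq>T. card T' > 1 \<longrightarrow> Dfun d T' > 0"
      using Tl unfolding Lset_def A_def by blast+
    have "finite (Pow A)" using finA by simp
    then have finT: "finite T" using TA by (rule finite_subset[rotated])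
    have Tne: "T \<noteq> {}"
    proof
      assume "T = {}"
      then have "\<gamma> = [0]" using gT by (simp add: gammaT_def)
      then show False using posg by simp
    qed
    have mT: "image_mset col (mset_set T) = mset \<gamma>"
    proof -
      have ce: "col = (\<lambda>X. d + 1 - card X)" by (simp add: fun_eq_iff col_def)
      have "rev (sorted_list_of_multiset (image_mset col (mset_set T))) = \<gamma>"
        using gT Tne by (simp add: gammaT_def ce)
      then have "mset (rev (sorted_list_of_multiset (image_mset col (mset_set T)))) = mset \<gamma>" by simp
      then show ?thesis by simp
    qed
    have cnt: "\<forall>k. card {i\<in>L. gi i = k} = card {X\<in>T. col X = k}"
      using cntL count_img_mset_set[OF finT, of col] mT by simp
    have FE: "{f\<in>Lab. f ` L = T} = {h \<in> L \<rightarrow>\<^sub>E T. bij_betw h L T \<and> (\<forall>i\<in>L. col (h i) = gi i)}"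
    proof (intro equalityI subsetI)
      fix f assume "f \<in> {f\<in>Lab. f ` L = T}"
      then have f: "f \<in> Lab" and fT: "f ` L = T" by auto
      have "f \<in> L \<rightarrow>\<^sub>E Pow A" using f unfolding Lab_def by blast
      then have "f \<in> L \<rightarrow>\<^sub>E T" using fT by (auto simp: PiE_def)
      then show "f \<in> {h \<in> L \<rightarrow>\<^sub>E T. bij_betw h L T \<and> (\<forall>i\<in>L. col (h i) = gi i)}"
        using injLab[OF f] fT colLab[OF f] by (auto simp: bij_betw_def)
    next
      fix h assume "h \<in> {h \<in> L \<rightarrow>\<^sub>E T. bij_betw h L T \<and> (\<forall>i\<in>L. col (h i) = gi i)}"
      then have hE: "h \<in> L \<rightarrow>\<^sub>E T" and hb: "bij_betw h L T" and hc: "\<forall>i\<in>L. col (h i) = gi i" by auto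
      have inj: "inj_on h L" and hT: "h ` L = T" using hb by (auto simp: bij_betw_def)
      have hE': "h \<in> L \<rightarrow>\<^sub>E Pow A" using hE TA by auto
      have sub: "\<forall>i\<in>L. h i \<subseteq> A" using hE' by auto
      have hcard: "\<forall>i\<in>L. int (card (h i)) = int d + 1 - int (gi i)"
      proof
        fix i assume i: "i \<in> L"
        have "card (h i) \<le> d" using Tc hE i by auto
        then show "int (card (h i)) = int d + 1 - int (gi i)" using hc i by (auto simp: col_def)
      qed
      have "int (card {j\<in>A. \<forall>i\<in>I. j \<in> h i}) < int d + 1 - (\<Sum>i\<in>I. int (gi i))"
        if IL: "I \<subseteq> L" and cI: "2 \<le> card I" for I
      proof -
        have Ine: "I \<noteq> {}" using cI by auto
        have "card (h ` I) = card I" using inj_on_subset[OF inj IL] card_image by metis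
        moreover have "h ` I \<subseteq> T" using IL hT by auto
        ultimately have "Dfun d (h ` I) > 0" using TD cI by auto
        moreover have "Dfun d (h ` I) = int d + 1 - int (card {j\<in>A. \<forall>i\<in>I. j \<in> h i}) - (\<Sum>i\<in>I. int (gi i))"
          using dfun_img[OF inj IL Ine sub, of d] sumg[OF hcard IL] by simp
        ultimately show ?thesis by simp
      qed
      then have "h \<in> Lab" using hE' hcard unfolding Lab_def gi_def by blast
      then show "h \<in> {f\<in>Lab. f ` L = T}" using hT by blast
    qed
    have K: "gi ` L \<subseteq> {1..d+1}"
    proof
      fix k assume "k \<in> gi ` L"
      then obtain i where i: "i \<in> L" "gi i = k" by blast
      then have "card {i\<in>L. gi i = k} > 0" using finL by (auto simp: card_gt_0_iff)
      then have "{X\<in>T. col X = k} \<noteq> {}" using cnt by (metis card.empty less_irrefl)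
      then obtain X where "X \<in> T" "col X = k" by blast
      then show "k \<in> {1..d+1}" using pos[OF i(1)] i(2) by (auto simp: col_def)
    qed
    have "card {f\<in>Lab. f ` L = T} = (\<Prod>k\<in>{1..d+1}. fact (card {i\<in>L. gi i = k}))"
      unfolding FE by (rule colbij[OF finL finT _ K cnt]) simp
    also have "\<dots> = (\<Prod>k=1..d. fact (card {i\<in>L. gi i = k})) * fact (card {i\<in>L. gi i = d + 1})"
      by (simp add: prod.cl_ivl_Suc)
    also have "fact (card {i\<in>L. gi i = d + 1}) = (1::nat)"
    proof -
      have "{X\<in>T. col X = d + 1} \<subseteq> {{}}"
      proof
        fix X assume X: "X \<in> {X\<in>T. col X = d + 1}"
        then have "X \<subseteq> A" using TA by blast
        then have "finite X" using finA by (rule finite_subset)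
        moreover have "card X = 0" using X unfolding col_def by simp linarith
        ultimately show "X \<in> {{}}" by simp
      qed
      then have "card {X\<in>T. col X = d + 1} \<le> card {{}::nat set}" by (intro card_mono) auto
      then have "card {i\<in>L. gi i = d + 1} \<le> 1" using cnt by simp
      then have "card {i\<in>L. gi i = d + 1} = 0 \<or> card {i\<in>L. gi i = d + 1} = 1" by linarith
      then show ?thesis by auto
    qed
    also have "(\<Prod>k=1..d. fact (card {i\<in>L. gi i = k})) = (\<Prod>k=1..d. fact (mult_part k \<gamma>))"
      by (simp add: cntL mult_part_def count_mset)
    finally show ?thesis by simp
  qed
  have finLab: "finite Lab"
  proof -
    have "Lab \<subseteq> L \<rightarrow>\<^sub>E Pow A" by (auto simp: Lab_def)
    moreover have "finite (L \<rightarrow>\<^sub>E Pow A)" using finL finA by (simp add: finite_PiE)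
    ultimately show ?thesis by (rule finite_subset)
  qed
  have finTarget: "finite Target"
  proof -
    have "Target \<subseteq> Pow (Pow A)" by (auto simp: Target_def Lset_def A_def)
    moreover have "finite (Pow (Pow A))" using finA by simp
    ultimately show ?thesis by (rule finite_subset)
  qed
  have "Lab = (\<Union>T\<in>Target. {f\<in>Lab. f ` L = T})" using imgT by auto
  moreover have "card (\<Union>T\<in>Target. {f\<in>Lab. f ` L = T}) = (\<Sum>T\<in>Target. card {f\<in>Lab. f ` L = T})"
    using finTarget finLab by (intro card_UN_disjoint) auto
  ultimately have "card Lab = (\<Sum>T\<in>Target. card {f\<in>Lab. f ` L = T})" by simp
  also have "\<dots> = card Target * (\<Prod>k=1..d. fact (mult_part k \<gamma>))" using fib by simp
  finally show ?thesis by (simp add: lambda_count_def Target_def)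
qed



theorem proposition4p7:
  fixes n d :: nat and \<gamma> :: "nat list"
  assumes "n > d"
    and "\<gamma> \<noteq> []"
    and "sorted_wrt (\<ge>) \<gamma>"
    and "\<forall>x\<in>set \<gamma>. x > 0"
  shows "real (lambda_count n d \<gamma>)
           = (1 / (\<Prod>k=1..d. real (fact (mult_part k \<gamma>))))
             * (\<Sum>\<nu>\<in>Nset n d \<gamma>.
                  real (fact n) / (\<Prod>I\<in>Pow {1..length \<gamma>}. real (fact (\<nu> I))))
       \<and> (1 / (\<Prod>k=1..d. real (fact (mult_part k \<gamma>))))
             * (\<Sum>\<nu>\<in>Nset n d \<gamma>.
                  real (fact n) / (\<Prod>I\<in>Pow {1..length \<gamma>}. real (fact (\<nu> I))))
         = (1 / (\<Prod>k=1..d. real (fact (mult_part k \<gamma>))))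
             * (\<Sum>\<nu>\<in>Nset n d \<gamma>.
                  real (fact (\<Sum>I\<in>Pow {1..length \<gamma>} - {{}}. \<nu> I))
                    / (\<Prod>I\<in>Pow {1..length \<gamma>} - {{}}. real (fact (\<nu> I)))
                  * real (n choose (\<Sum>I\<in>Pow {1..length \<gamma>} - {{}}. \<nu> I)))"
proof (rule conjI)
  define Pk where "Pk = (\<Prod>k=1..d. real (fact (mult_part k \<gamma>)))"
  define S where "S = (\<Sum>\<nu>\<in>Nset n d \<gamma>. real (fact n) / (\<Prod>I\<in>Pow {1..length \<gamma>}. real (fact (\<nu> I))))"
  have eq: "real (lambda_count n d \<gamma>) * Pk = S"
    using partA[of \<gamma> n d] partB[OF assms(2-4), of n d]
    unfolding Pk_def S_def by (metis of_nat_mult of_nat_prod)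
  have "Pk \<noteq> 0" unfolding Pk_def by (simp add: prod_zero_iff)
  then show "real (lambda_count n d \<gamma>) = (1 / Pk) * S" using eq by (simp add: field_simps)
next
  define P where "P = Pow {1..length \<gamma>}"
  have tm: "real (fact n) / (\<Prod>I\<in>P. real (fact (\<nu> I)))
      = real (fact (\<Sum>I\<in>P - {{}}. \<nu> I)) / (\<Prod>I\<in>P - {{}}. real (fact (\<nu> I)))
        * real (n choose (\<Sum>I\<in>P - {{}}. \<nu> I))" if \<nu>: "\<nu> \<in> Nset n d \<gamma>" for \<nu>
  proof -
    define s where "s = (\<Sum>I\<in>P - {{}}. \<nu> I)"
    have finP: "finite P" and eP: "{} \<in> P" by (auto simp: P_def)
    have "(\<Sum>I\<in>P. \<nu> I) = n" using \<nu> by (simp add: Nset_def P_def)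
    moreover have "(\<Sum>I\<in>P. \<nu> I) = \<nu> {} + s" using finP eP by (simp add: s_def sum.remove)
    ultimately have sn: "s \<le> n" and e0: "\<nu> {} = n - s" by auto
    have pr: "(\<Prod>I\<in>P. real (fact (\<nu> I))) = real (fact (n - s)) * (\<Prod>I\<in>P - {{}}. real (fact (\<nu> I)))"
      using finP eP e0 by (simp add: prod.remove)
    have "(\<Prod>I\<in>P - {{}}. real (fact (\<nu> I))) \<noteq> 0" by (simp add: prod_zero_iff finP)
    then show ?thesis
      unfolding s_def[symmetric] pr using binomial_fact[OF sn, where 'a=real]
      by (simp add: field_simps)
  qed
  show "(1 / (\<Prod>k=1..d. real (fact (mult_part k \<gamma>))))
             * (\<Sum>\<nu>\<in>Nset n d \<gamma>.
                  real (fact n) / (\<Prod>I\<in>Pow {1..length \<gamma>}. real (fact (\<nu> I))))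
         = (1 / (\<Prod>k=1..d. real (fact (mult_part k \<gamma>))))
             * (\<Sum>\<nu>\<in>Nset n d \<gamma>.
                  real (fact (\<Sum>I\<in>Pow {1..length \<gamma>} - {{}}. \<nu> I))
                    / (\<Prod>I\<in>Pow {1..length \<gamma>} - {{}}. real (fact (\<nu> I)))
                  * real (n choose (\<Sum>I\<in>Pow {1..length \<gamma>} - {{}}. \<nu> I)))"
    using tm unfolding P_def by (intro arg_cong[where f="\<lambda>x. _ * x"] sum.cong) auto
qed


end
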